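(* Let $n\ge 2$ and let $(x_1,\dots,x_n)\in A_n$ be a point at which $S_n$ attains its maximum over $A_n$. Then $x_1-x_2\le 1$.
   Context: For an integer $n\ge 2$, $A_n$ is the set of integer vectors $(x_1,\dots,x_n)\in\mathbb{Z}^n$ such that $n\ge x_1\ge x_2\ge\cdots\ge x_n\ge 0$, $\sum_{i=1}^k x_i\le 2n+6k-16$ for every $k\in\{1,\dots,n\}$, and $\sum_{i=1}^n x_i\le 6n-12$. For an integer $m\ge 2$, $S_m:\mathbb{R}^m\to\mathbb{R}$ is defined by $S_m(x_1,\dots,x_m)=\sum_{i=1}^{m-1}\sum_{j=i+1}^{m} x_i x_j^2$. *)

theory Defs
  imports Complex_Main
begin

text \<open>Vectors in Z^n are represented as functions nat => int indexed by 1..n,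
  with value 0 outside {1..n} (so that A n is in bijection with the set in the paper).\<close>

definition A :: "nat \<Rightarrow> (nat \<Rightarrow> int) set" where
  "A n = {x. (\<forall>i. i \<notin> {1..n} \<longrightarrow> x i = 0)
            \<and> x 1 \<le> int n
            \<and> (\<forall>i\<in>{1..<n}. x i \<ge> x (Suc i))
            \<and> x n \<ge> 0
            \<and> (\<forall>k\<in>{1..n}. (\<Sum>i=1..k. x i) \<le> 2 * int n + 6 * int k - 16)
            \<and> (\<Sum>i=1..n. x i) \<le> 6 * int n - 12}"

definition S :: "nat \<Rightarrow> (nat \<Rightarrow> real) \<Rightarrow> real" where
  "S m x = (\<Sum>i=1..m-1. \<Sum>j=i+1..m. x i * (x j)^2)"

end

theory Submission
  imports Defs
begin

lemma S_Suc:
  "S (Suc (Suc k)) f = S (Suc k) f + (\<Sum>i=1..Suc k. f i) * (f (Suc (Suc k)))^2"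
proof -
  have "S (Suc (Suc k)) f = (\<Sum>i=1..Suc k. \<Sum>j=i+1..Suc (Suc k). f i * (f j)^2)"
    by (simp add: S_def)
  also have "\<dots> = (\<Sum>i=1..Suc k. (\<Sum>j=i+1..Suc k. f i * (f j)^2) + f i * (f (Suc (Suc k)))^2)"
    by (rule sum.cong) (auto simp: sum.cl_ivl_Suc)
  also have "\<dots> = (\<Sum>i=1..Suc k. (\<Sum>j=i+1..Suc k. f i * (f j)^2)) + (\<Sum>i=1..Suc k. f i) * (f (Suc (Suc k)))^2"
    by (simp only: sum.distrib sum_distrib_right)
  also have "(\<Sum>i=1..Suc k. (\<Sum>j=i+1..Suc k. f i * (f j)^2)) = S (Suc k) f"
    by (simp add: S_def sum.cl_ivl_Suc)
  finally show ?thesis .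
qed

lemma sum_swap12:
  fixes f g :: "nat \<Rightarrow> 'a::comm_ring"
  assumes "\<And>i. i \<noteq> 1 \<Longrightarrow> i \<noteq> 2 \<Longrightarrow> g i = f i" "g 1 + g 2 = f 1 + f 2" "2 \<le> k"
  shows "(\<Sum>i=1..k. g i) = (\<Sum>i=1..k. f i)"
  using assms(3)
proof (induction k rule: dec_induct)
  case base
  then show ?case using assms(2) by (simp add: numeral_2_eq_2 sum.cl_ivl_Suc)
next
  case (step k)
  then show ?case using assms(1)[of "Suc k"] by (simp add: sum.cl_ivl_Suc)
qed

lemma S_swap12:
  assumes "\<And>i. i \<noteq> 1 \<Longrightarrow> i \<noteq> 2 \<Longrightarrow> g i = f i" "g 1 + g 2 = f 1 + f 2" "2 \<le> m"
  shows "S m g - S m f = g 1 * (g 2)^2 - f 1 * (f 2)^2"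
  using assms(3)
proof (induction m rule: dec_induct)
  case base
  then show ?case by (simp add: S_def numeral_2_eq_2)
next
  case (step k)
  then obtain j where k: "k = Suc j" by (cases k) auto
  have "(\<Sum>i=1..k. g i) = (\<Sum>i=1..k. f i)"
    by (rule sum_swap12[OF assms(1,2) step(1)])
  moreover have "g (Suc k) = f (Suc k)" using step(1) by (intro assms(1)) auto
  ultimately show ?case using step(3) unfolding k S_Suc by (simp add: algebra_simps)
qed

theorem lemma6:
  fixes n :: nat and x :: "nat \<Rightarrow> int"
  assumes "n \<ge> 2"
    and "x \<in> A n"
    and "\<forall>y\<in>A n. S n (\<lambda>i. real_of_int (y i)) \<le> S n (\<lambda>i. real_of_int (x i))"
  shows "x 1 - x 2 \<le> 1"
proof (rule ccontr)
  assume c: "\<not> x 1 - x 2 \<le> 1"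
  define y where "y = x(1 := x 1 - 1, 2 := x 2 + 1)"
  have xA: "(\<forall>i. i \<notin> {1..n} \<longrightarrow> x i = 0)" "x 1 \<le> int n"
            "(\<forall>i\<in>{1..<n}. x i \<ge> x (Suc i))" "x n \<ge> 0"
            "(\<forall>k\<in>{1..n}. (\<Sum>i=1..k. x i) \<le> 2 * int n + 6 * int k - 16)"
            "(\<Sum>i=1..n. x i) \<le> 6 * int n - 12"
    using assms(2) unfolding A_def by auto
  have mono: "i \<le> j \<Longrightarrow> 1 \<le> i \<Longrightarrow> j \<le> n \<Longrightarrow> x j \<le> x i" for i j
  proof (induction j rule: dec_induct)
    case base then show ?case by simp
  next
    case (step k)
    then have "x (Suc k) \<le> x k" using xA(3) by auto
    then show ?case using step by simp
  qed
  have x2: "x 2 \<ge> 0" using mono[of 2 n] assms(1) xA(4) by simp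
  have yo: "\<And>i. i \<noteq> 1 \<Longrightarrow> i \<noteq> 2 \<Longrightarrow> y i = x i" and y1: "y 1 = x 1 - 1" and y2: "y 2 = x 2 + 1"
    by (auto simp: y_def)
  have ysum: "2 \<le> k \<Longrightarrow> (\<Sum>i=1..k. y i) = (\<Sum>i=1..k. x i)" for k
    by (rule sum_swap12) (auto simp: y_def)
  have "y \<in> A n"
    unfolding A_def
  proof (intro CollectI conjI allI ballI impI)
    fix i assume "i \<notin> {1..n}" then show "y i = 0" using xA(1) assms(1) yo by auto
  next
    show "y 1 \<le> int n" using xA(2) y1 by simp
  next
    fix i assume i: "i \<in> {1..<n}"
    show "y (Suc i) \<le> y i"
    proof (cases "i = 1")
      case True then show ?thesis using c y1 y2 by (simp add: numeral_2_eq_2)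
    next
      case False
      then have "i \<ge> 2" using i by auto
      moreover have "x (Suc i) \<le> x i" using xA(3) i by auto
      moreover have "x (Suc i) \<le> x 2" using mono[of 2 "Suc i"] i \<open>i \<ge> 2\<close> by auto
      ultimately show ?thesis using yo y2
        by (cases "i = 2") (auto simp: numeral_2_eq_2)
    qed
  next
    show "y n \<ge> 0" using xA(4) x2 yo y2 assms(1) by (cases "n = 2") auto
  next
    fix k assume k: "k \<in> {1..n}"
    show "(\<Sum>i=1..k. y i) \<le> 2 * int n + 6 * int k - 16"
    proof (cases "k = 1")
      case True then show ?thesis using xA(5) k y1 by force
    next
      case False then show ?thesis using xA(5) k ysum[of k] by auto
    qed
  next
    show "(\<Sum>i=1..n. y i) \<le> 6 * int n - 12" using xA(6) ysum assms(1) by simp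
  qed
  have d: "S n (\<lambda>i. real_of_int (y i)) - S n (\<lambda>i. real_of_int (x i))
      = real_of_int (y 1) * (real_of_int (y 2))^2 - real_of_int (x 1) * (real_of_int (x 2))^2"
    by (rule S_swap12) (auto simp: y_def assms(1))
  have "y 1 * (y 2)^2 - x 1 * (x 2)^2 > 0"
  proof -
    have "y 1 * (y 2)^2 - x 1 * (x 2)^2 = 2 * x 1 * x 2 + x 1 - (x 2)^2 - 2 * x 2 - 1"
      unfolding y1 y2 by (simp add: algebra_simps power2_eq_square)
    moreover have "2 * x 1 * x 2 \<ge> 2 * (x 2 + 2) * x 2" using c x2 by (intro mult_right_mono) auto
    then have "2 * x 2 * x 2 + 4 * x 2 \<le> 2 * x 1 * x 2" by (simp add: algebra_simps)
    moreover have "x 2 * x 2 \<ge> 0" using x2 by simp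
    ultimately show ?thesis using c x2 unfolding power2_eq_square by linarith
  qed
  then have "real_of_int (y 1) * (real_of_int (y 2))^2 - real_of_int (x 1) * (real_of_int (x 2))^2 > 0"
    by (metis of_int_0_less_iff of_int_diff of_int_mult of_int_power)
  with d assms(3) \<open>y \<in> A n\<close> show False by force
qed

end
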